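(* Let $t>2$ and let $G=K_{n_1,n_2,\dots,n_t}$ be the complete $t$-partite graph with parts of sizes $n_1,\dots,n_t$, where $n_i\geq 2$ for all $i=1,\dots,t$. Then $G$ is a $\mathcal{P}$ position for Grim if and only if $|V(G)|=n_1+\dots+n_t$ is even.
   Context: Grim is a two-player game on a finite simple undirected graph. Any isolated vertices of the starting graph are deleted before play begins. Players alternate moves; a move consists of selecting a vertex of the current graph and deleting it together with all its incident edges, after which every vertex that has become isolated is also deleted. The player who makes the last legal move wins (a player facing the empty graph has no move and loses). A graph is an $\mathcal{N}$ position if the player about to move has a winning strategy, and a $\mathcal{P}$ position otherwise. *)

theory Defs
  imports Main
begin

text \<open>A finite simple graph with its isolated vertices deleted is determined by its
edge set: we represent it as a set of edges, each edge a 2-element set of vertices.\<close>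

definition grim_vertices :: "'a set set \<Rightarrow> 'a set" where
  "grim_vertices E = \<Union>E"

text \<open>Grim move: delete vertex v and all incident edges; vertices that become isolated
disappear automatically (they no longer occur in any edge).\<close>
definition grim_move :: "'a \<Rightarrow> 'a set set \<Rightarrow> 'a set set" where
  "grim_move v E = {e \<in> E. v \<notin> e}"

text \<open>P positions (previous player wins) and N positions (next player wins),
last player to move wins.\<close>
inductive grimP :: "'a set set \<Rightarrow> bool" and grimN :: "'a set set \<Rightarrow> bool" where
  P_intro: "(\<And>v. v \<in> grim_vertices E \<Longrightarrow> grimN (grim_move v E)) \<Longrightarrow> grimP E"
| N_intro: "v \<in> grim_vertices E \<Longrightarrow> grimP (grim_move v E) \<Longrightarrow> grimN E"

definition complete_multipartite :: "nat \<Rightarrow> (nat \<Rightarrow> 'a set) \<Rightarrow> 'a set set" where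
  "complete_multipartite t P =
     {{x, y} | x y. \<exists>i j. i < t \<and> j < t \<and> i \<noteq> j \<and> x \<in> P i \<and> y \<in> P j}"

end

theory Submission
  imports Defs
begin

lemma grim_excl:
  shows "grimP E \<Longrightarrow> \<not> grimN E" and "grimN E \<Longrightarrow> \<not> grimP E"
proof (induction rule: grimP_grimN.inducts)
  case (P_intro E)
  then show ?case by (metis grimN.cases)
next
  case (N_intro v E)
  then show ?case by (metis grimP.cases)
qed

lemma move_cm: "grim_move v (complete_multipartite t Q) = complete_multipartite t (\<lambda>k. Q k - {v})"
  unfolding grim_move_def complete_multipartite_def by blast

lemma vert_intro:
  assumes "i < t" "j < t" "i \<noteq> j" "v \<in> Q i" "w \<in> Q j"
  shows "v \<in> grim_vertices (complete_multipartite t Q)"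
proof -
  have "{v, w} \<in> complete_multipartite t Q"
    unfolding complete_multipartite_def using assms by blast
  then show ?thesis unfolding grim_vertices_def by blast
qed

lemma vert_elim:
  assumes "v \<in> grim_vertices (complete_multipartite t Q)"
  shows "\<exists>i<t. v \<in> Q i \<and> (\<exists>j<t. j \<noteq> i \<and> Q j \<noteq> {})"
  using assms unfolding grim_vertices_def complete_multipartite_def by blast

lemma sum_remove:
  fixes t :: nat
  assumes disj: "\<forall>i<t. \<forall>j<t. i \<noteq> j \<longrightarrow> Q i \<inter> Q j = {}"
    and fin: "\<forall>i<t. finite (Q i)" and i: "i < t" and v: "v \<in> Q i"
  shows "(\<Sum>k<t. card (Q k - {v})) + 1 = (\<Sum>k<t. card (Q k))"
proof -
  have eq: "\<And>k. k \<in> {..<t} - {i} \<Longrightarrow> card (Q k - {v}) = card (Q k)"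
  proof -
    fix k assume "k \<in> {..<t} - {i}"
    then have "v \<notin> Q k" using disj i v by blast
    then show "card (Q k - {v}) = card (Q k)" by simp
  qed
  have ci: "card (Q i - {v}) + 1 = card (Q i)"
    using fin i v by (metis One_nat_def Suc_pred add.commute card_Diff_singleton card_gt_0_iff
        empty_iff plus_1_eq_Suc)
  have "(\<Sum>k<t. card (Q k - {v})) = card (Q i - {v}) + (\<Sum>k\<in>{..<t} - {i}. card (Q k - {v}))"
    by (rule sum.remove) (use i in auto)
  also have "\<dots> = card (Q i - {v}) + (\<Sum>k\<in>{..<t} - {i}. card (Q k))"
    using eq by simp
  moreover have "(\<Sum>k<t. card (Q k)) = card (Q i) + (\<Sum>k\<in>{..<t} - {i}. card (Q k))"
    by (rule sum.remove) (use i in auto)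
  ultimately show ?thesis using ci by linarith
qed

lemma odd_sum_ex: "odd (\<Sum>k<(t::nat). f k) \<Longrightarrow> \<exists>l<t. odd ((f::nat \<Rightarrow> nat) l)"
proof (rule ccontr)
  assume "odd (\<Sum>k<(t::nat). f k)" and "\<not> (\<exists>l<t. odd (f l))"
  then have "\<forall>l\<in>{..<t}. even (f l)" by auto
  then have "even (\<Sum>k<t. f k)" by (intro dvd_sum) auto
  then show False using \<open>odd (\<Sum>k<t. f k)\<close> by simp
qed

lemma card_minus1: "finite A \<Longrightarrow> v \<in> A \<Longrightarrow> card (A - {v}) + 1 = card A"
  by (metis card_Suc_Diff1 Suc_eq_plus1)

lemma main:
  fixes t :: nat
  shows "\<And>Q. s = (\<Sum>k<t. card (Q k)) \<Longrightarrow>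
    \<forall>i<t. \<forall>j<t. i \<noteq> j \<longrightarrow> Q i \<inter> Q j = {} \<Longrightarrow>
    \<forall>i<t. finite (Q i) \<Longrightarrow> \<forall>i<t. card (Q i) \<noteq> 1 \<Longrightarrow> even s \<Longrightarrow>
    grimP (complete_multipartite t Q)"
proof (induction s rule: less_induct)
  case (less s Q)
  note disj = less.prems(2) and fin = less.prems(3) and no1 = less.prems(4)
  show ?case
  proof (rule P_intro)
    fix v assume "v \<in> grim_vertices (complete_multipartite t Q)"
    then have "\<exists>i<t. v \<in> Q i \<and> (\<exists>j<t. j \<noteq> i \<and> Q j \<noteq> {})" by (rule vert_elim)
    then obtain i where i: "i < t" "v \<in> Q i" and "\<exists>j<t. j \<noteq> i \<and> Q j \<noteq> {}" by blast
    then obtain j where j: "j < t" "j \<noteq> i" "Q j \<noteq> {}" by blast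
    define Q1 where "Q1 = (\<lambda>k. Q k - {v})"
    have mv: "grim_move v (complete_multipartite t Q) = complete_multipartite t Q1"
      unfolding Q1_def by (rule move_cm)
    have disj1: "\<forall>i<t. \<forall>j<t. i \<noteq> j \<longrightarrow> Q1 i \<inter> Q1 j = {}"
    proof (intro allI impI)
      fix a b assume "a < t" "b < t" "a \<noteq> b"
      then have "Q a \<inter> Q b = {}" using disj by blast
      then show "Q1 a \<inter> Q1 b = {}" unfolding Q1_def by blast
    qed
    have fin1: "\<forall>i<t. finite (Q1 i)" using fin unfolding Q1_def by simp
    have s1: "(\<Sum>k<t. card (Q1 k)) + 1 = s"
      using sum_remove[OF disj fin i] less.prems(1) unfolding Q1_def by simp
    have odd1: "odd (\<Sum>k<t. card (Q1 k))" using s1 less.prems(5) by (metis even_plus_one_iff)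
    have ci: "card (Q1 i) + 1 = card (Q i)"
      unfolding Q1_def using fin i card_minus1[of "Q i" v] by blast
    have oth: "Q1 k = Q k" if "k < t" "k \<noteq> i" for k
    proof -
      have "Q k \<inter> Q i = {}" using disj that i(1) by blast
      then have "v \<notin> Q k" using i(2) by blast
      then show ?thesis unfolding Q1_def by simp
    qed
    have "card (Q i) \<noteq> 1" using no1 i by blast
    then have ci2: "card (Q1 i) \<ge> 1" using ci by linarith
    have step: "grimN (complete_multipartite t Q1)"
      if l: "l < t" "w \<in> Q1 l" and m: "m < t" "m \<noteq> l" "Q1 m \<noteq> {}"
        and cl: "card (Q1 l) \<noteq> 2"
        and nl: "\<forall>k<t. k \<noteq> l \<longrightarrow> card (Q1 k) \<noteq> 1"
      for l w m
    proof (rule N_intro)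
      obtain u where u: "u \<in> Q1 m" using m by blast
      show "w \<in> grim_vertices (complete_multipartite t Q1)"
        using vert_intro[OF l(1) m(1) m(2)[symmetric] l(2) u] .
      define Q2 where "Q2 = (\<lambda>k. Q1 k - {w})"
      have mv2: "grim_move w (complete_multipartite t Q1) = complete_multipartite t Q2"
        unfolding Q2_def by (rule move_cm)
      have disj2: "\<forall>i<t. \<forall>j<t. i \<noteq> j \<longrightarrow> Q2 i \<inter> Q2 j = {}"
      proof (intro allI impI)
        fix a b assume "a < t" "b < t" "a \<noteq> b"
        then have "Q1 a \<inter> Q1 b = {}" using disj1 by blast
        then show "Q2 a \<inter> Q2 b = {}" unfolding Q2_def by blast
      qed
      have fin2: "\<forall>i<t. finite (Q2 i)" using fin1 unfolding Q2_def by simp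
      have s2: "(\<Sum>k<t. card (Q2 k)) + 1 = (\<Sum>k<t. card (Q1 k))"
        using sum_remove[OF disj1 fin1 l] unfolding Q2_def by simp
      have cl2: "card (Q2 l) + 1 = card (Q1 l)"
        unfolding Q2_def using fin1 l card_minus1[of "Q1 l" w] by blast
      have oth2: "Q2 k = Q1 k" if "k < t" "k \<noteq> l" for k
      proof -
        have "Q1 k \<inter> Q1 l = {}" using disj1 that l(1) by blast
        then have "w \<notin> Q1 k" using l(2) by blast
        then show ?thesis unfolding Q2_def by simp
      qed
      have no2: "\<forall>k<t. card (Q2 k) \<noteq> 1"
      proof (intro allI impI)
        fix k assume k: "k < t"
        show "card (Q2 k) \<noteq> 1"
        proof (cases "k = l")
          case True then show ?thesis using cl2 cl by auto
        next
          case False then show ?thesis using oth2[OF k False] nl k by auto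
        qed
      qed
      have lt: "(\<Sum>k<t. card (Q2 k)) < s" using s1 s2 by linarith
      have ev: "even (\<Sum>k<t. card (Q2 k))" using s2 odd1 by (metis even_plus_one_iff)
      have "grimP (complete_multipartite t Q2)"
        using less.IH[OF lt refl disj2 fin2 no2 ev] .
      then show "grimP (grim_move w (complete_multipartite t Q1))" using mv2 by simp
    qed
    have "grimN (complete_multipartite t Q1)"
    proof (cases "card (Q1 i) = 1")
      case True
      then obtain w where w: "w \<in> Q1 i" by (metis card_1_singletonE insertI1)
      have "Q1 j \<noteq> {}" using oth j by simp
      moreover have "\<forall>k<t. k \<noteq> i \<longrightarrow> card (Q1 k) \<noteq> 1" using oth no1 by simp
      ultimately show ?thesis using step[OF i(1) w j(1) j(2)] True by simp
    next
      case False
      have ge2: "card (Q1 i) \<ge> 2" using False ci2 by simp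
      obtain l where l: "l < t" "odd (card (Q1 l))" using odd_sum_ex[OF odd1] by blast
      have no1': "\<forall>k<t. card (Q1 k) \<noteq> 1"
      proof (intro allI impI)
        fix k assume k: "k < t"
        show "card (Q1 k) \<noteq> 1"
        proof (cases "k = i")
          case True then show ?thesis using False by simp
        next
          case f: False then show ?thesis using oth[OF k f] no1 k by auto
        qed
      qed
      have "card (Q1 l) \<noteq> 1" using no1' l by blast
      moreover have "card (Q1 l) \<noteq> 0" using l(2) by (metis dvd_0_right)
      moreover have "card (Q1 l) \<noteq> 2" using l(2) by (metis dvd_refl)
      ultimately have cl3: "card (Q1 l) \<ge> 3" by linarith
      then have "Q1 l \<noteq> {}" by auto
      then obtain w where w: "w \<in> Q1 l" by blast
      obtain m where m: "m < t" "m \<noteq> l" "Q1 m \<noteq> {}"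
      proof (cases "l = i")
        case True then show ?thesis using that[of j] oth j by simp
      next
        case False then show ?thesis using that[of i] i ge2 by force
      qed
      show ?thesis using step[OF l(1) w m] cl3 no1' by simp
    qed
    then show "grimN (grim_move v (complete_multipartite t Q))" using mv by simp
  qed
qed

theorem theorem3p4:
  fixes t :: nat and n :: "nat \<Rightarrow> nat" and P :: "nat \<Rightarrow> 'a set"
  assumes "t > 2"
    and "\<And>i. i < t \<Longrightarrow> card (P i) = n i"
    and "\<And>i. i < t \<Longrightarrow> n i \<ge> 2"
    and "\<And>i j. i < t \<Longrightarrow> j < t \<Longrightarrow> i \<noteq> j \<Longrightarrow> P i \<inter> P j = {}"
  shows "grimP (complete_multipartite t P) \<longleftrightarrow> even (\<Sum>i<t. n i)"
proof -
  have fin: "\<forall>i<t. finite (P i)"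
  proof (intro allI impI)
    fix i assume "i < t"
    then have "card (P i) \<ge> 2" using assms(2,3) by simp
    then show "finite (P i)" by (metis card.infinite not_numeral_le_zero)
  qed
  have disj: "\<forall>i<t. \<forall>j<t. i \<noteq> j \<longrightarrow> P i \<inter> P j = {}" using assms(4) by blast
  have c2: "card (P i) \<ge> 2" if "i < t" for i using assms(2,3) that by simp
  have no1: "\<forall>i<t. card (P i) \<noteq> 1"
  proof (intro allI impI)
    fix i assume "i < t"
    then show "card (P i) \<noteq> 1" using c2[of i] by linarith
  qed
  have sumeq: "(\<Sum>i<t. card (P i)) = (\<Sum>i<t. n i)"
    by (rule sum.cong) (auto simp: assms(2))
  have oddcase: "grimN (complete_multipartite t P)" if odd: "odd (\<Sum>i<t. card (P i))"
  proof -
    obtain l where l: "l < t" "odd (card (P l))" using odd_sum_ex[OF odd] by blast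
    have "card (P l) \<noteq> 2" using l(2) by (metis dvd_refl)
    then have cl3: "card (P l) \<ge> 3" using c2[OF l(1)] by linarith
    then have "P l \<noteq> {}" by auto
    then obtain w where w: "w \<in> P l" by blast
    define m where "m = (if l = 0 then 1 else (0::nat))"
    have m: "m < t" "m \<noteq> l" unfolding m_def using assms(1) by auto
    have "card (P m) \<ge> 2" using c2 m by blast
    then have "P m \<noteq> {}" by auto
    then obtain u where u: "u \<in> P m" by blast
    define Q1 where "Q1 = (\<lambda>k. P k - {w})"
    show ?thesis
    proof (rule N_intro)
      show "w \<in> grim_vertices (complete_multipartite t P)"
        using vert_intro[OF l(1) m(1) m(2)[symmetric] w u] .
      have mv: "grim_move w (complete_multipartite t P) = complete_multipartite t Q1"
        unfolding Q1_def by (rule move_cm)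
      have disj1: "\<forall>i<t. \<forall>j<t. i \<noteq> j \<longrightarrow> Q1 i \<inter> Q1 j = {}"
      proof (intro allI impI)
        fix a b assume "a < t" "b < t" "a \<noteq> b"
        then have "P a \<inter> P b = {}" using disj by blast
        then show "Q1 a \<inter> Q1 b = {}" unfolding Q1_def by blast
      qed
      have fin1: "\<forall>i<t. finite (Q1 i)" using fin unfolding Q1_def by simp
      have s1: "(\<Sum>k<t. card (Q1 k)) + 1 = (\<Sum>k<t. card (P k))"
        using sum_remove[OF disj fin l(1) w] unfolding Q1_def by simp
      have ev: "even (\<Sum>k<t. card (Q1 k))" using s1 odd by (metis even_plus_one_iff)
      have cl: "card (Q1 l) + 1 = card (P l)"
        unfolding Q1_def using fin l card_minus1[of "P l" w] w by blast
      have oth: "Q1 k = P k" if "k < t" "k \<noteq> l" for k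
      proof -
        have "P k \<inter> P l = {}" using disj that l(1) by blast
        then have "w \<notin> P k" using w by blast
        then show ?thesis unfolding Q1_def by simp
      qed
      have no1': "\<forall>k<t. card (Q1 k) \<noteq> 1"
      proof (intro allI impI)
        fix k assume k: "k < t"
        show "card (Q1 k) \<noteq> 1"
        proof (cases "k = l")
          case True then show ?thesis using cl cl3 by auto
        next
          case False then show ?thesis using oth[OF k False] no1 k by auto
        qed
      qed
      have "grimP (complete_multipartite t Q1)"
        using main[OF refl disj1 fin1 no1' ev] .
      then show "grimP (grim_move w (complete_multipartite t P))" using mv by simp
    qed
  qed
  show ?thesis
  proof
    assume gp: "grimP (complete_multipartite t P)"
    show "even (\<Sum>i<t. n i)"
    proof (rule ccontr)
      assume "odd (\<Sum>i<t. n i)"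
      then have "grimN (complete_multipartite t P)" using oddcase sumeq by simp
      then show False using grim_excl(2) gp by blast
    qed
  next
    assume "even (\<Sum>i<t. n i)"
    then have "even (\<Sum>i<t. card (P i))" using sumeq by simp
    then show "grimP (complete_multipartite t P)" using main[OF refl disj fin no1] by blast
  qed
qed

end
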